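(* For every positive integer $n$, the Logarithmic Least Squares Method satisfies invariance to $\alpha$-transformation on a triad: if $\mathbf{A},\hat{\mathbf{A}}\in\mathcal{A}^{n\times n}$ and $\hat{\mathbf{A}}$ is obtained from $\mathbf{A}$ by an $\alpha$-transformation on a triad, then $\mathbf{w}^{LLSM}(\mathbf{A}) = \mathbf{w}^{LLSM}(\hat{\mathbf{A}})$.
   Context: A pairwise comparison matrix of size $n$ is a matrix $\mathbf{A} = [a_{i,j}]$ with positive entries and $a_{j,i} = 1/a_{i,j}$ for all $i,j$; $\mathcal{A}^{n\times n}$ denotes the set of these. The Logarithmic Least Squares Method assigns to $\mathbf{A}$ the minimizer $\mathbf{w}^{LLSM}(\mathbf{A})$, over vectors $\mathbf{w}$ with positive entries summing to 1, of $\sum_{i,j}[\log a_{i,j} - \log(w_i/w_j)]^2$; equivalently $w^{LLSM}_i(\mathbf{A}) = \prod_j a_{i,j}^{1/n}/\sum_k \prod_j a_{k,j}^{1/n}$. An $\alpha$-transformation on the triad $(i,j,k)$ (three distinct indices), with $\alpha>0$, maps $\mathbf{A}$ to $\hat{\mathbf{A}}$ with $\hat a_{i,j} = \alpha a_{i,j}$, $\hat a_{j,i} = a_{j,i}/\alpha$, $\hat a_{j,k} = \alpha a_{j,k}$, $\hat a_{k,j} = a_{k,j}/\alpha$, $\hat a_{k,i} = \alpha a_{k,i}$, $\hat a_{i,k} = a_{i,k}/\alpha$, all other entries unchanged. *)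

theory Defs
  imports Complex_Main
begin

text \<open>Matrices of size n are functions nat => nat => real; only indices < n matter.\<close>

definition is_PCM :: "nat \<Rightarrow> (nat \<Rightarrow> nat \<Rightarrow> real) \<Rightarrow> bool" where
  "is_PCM n A \<longleftrightarrow> (\<forall>i<n. \<forall>j<n. A i j > 0 \<and> A j i = 1 / A i j)"

text \<open>LLSM weight vector via the geometric-mean closed form (row geometric means, normalised).\<close>
definition w_LLSM :: "nat \<Rightarrow> (nat \<Rightarrow> nat \<Rightarrow> real) \<Rightarrow> nat \<Rightarrow> real" where
  "w_LLSM n A i =
     (\<Prod>j<n. A i j powr (1 / real n)) / (\<Sum>k<n. \<Prod>j<n. A k j powr (1 / real n))"

definition alpha_transform ::
  "real \<Rightarrow> nat \<Rightarrow> nat \<Rightarrow> nat \<Rightarrow> (nat \<Rightarrow> nat \<Rightarrow> real) \<Rightarrow> (nat \<Rightarrow> nat \<Rightarrow> real)" where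
  "alpha_transform \<alpha> i j k A = (\<lambda>p q.
     if (p, q) = (i, j) \<or> (p, q) = (j, k) \<or> (p, q) = (k, i) then \<alpha> * A p q
     else if (p, q) = (j, i) \<or> (p, q) = (k, j) \<or> (p, q) = (i, k) then A p q / \<alpha>
     else A p q)"

end

theory Submission
  imports Defs
begin

lemma prod_swap2:
  fixes f g :: "nat \<Rightarrow> real"
  assumes "finite S" "a \<in> S" "b \<in> S" "a \<noteq> b" "c \<noteq> 0"
    and "g a = c * f a" "g b = f b / c" "\<And>x. x \<in> S \<Longrightarrow> x \<noteq> a \<Longrightarrow> x \<noteq> b \<Longrightarrow> g x = f x"
  shows "prod g S = prod f S"
proof -
  have r: "prod g (S - {a} - {b}) = prod f (S - {a} - {b})"
    by (rule prod.cong) (auto simp: assms(8))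
  have bS: "b \<in> S - {a}" using assms(3,4) by simp
  have "prod g S = g a * prod g (S - {a})" using assms(1,2) by (rule prod.remove)
  also have "prod g (S - {a}) = g b * prod g (S - {a} - {b})"
    using assms(1) bS by (intro prod.remove) simp_all
  finally have 1: "prod g S = g a * (g b * prod g (S - {a} - {b}))" .
  have "prod f S = f a * prod f (S - {a})" using assms(1,2) by (rule prod.remove)
  also have "prod f (S - {a}) = f b * prod f (S - {a} - {b})"
    using assms(1) bS by (intro prod.remove) simp_all
  finally have 2: "prod f S = f a * (f b * prod f (S - {a} - {b}))" .
  note 1 2
  have "prod g S = (c * f a) * (f b / c * prod f (S - {a} - {b}))"
    unfolding 1 r assms(6,7) ..
  also have "\<dots> = f a * (f b * prod f (S - {a} - {b}))"
    using assms(5) by (simp add: field_simps)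
  finally show ?thesis using 2 by simp
qed

theorem proposition3p3:
  fixes n :: nat and A :: "nat \<Rightarrow> nat \<Rightarrow> real" and \<alpha> :: real and i j k :: nat
  assumes "n \<ge> 1"
    and "is_PCM n A"
    and "i < n" "j < n" "k < n" "i \<noteq> j" "j \<noteq> k" "i \<noteq> k"
    and "\<alpha> > 0"
  shows "\<forall>m<n. w_LLSM n A m = w_LLSM n (alpha_transform \<alpha> i j k A) m"
proof -
  define B where "B = alpha_transform \<alpha> i j k A"
  define e where "e = 1 / real n"
  have pos: "\<And>p q. p < n \<Longrightarrow> q < n \<Longrightarrow> A p q > 0" using assms(2) unfolding is_PCM_def by blast
  have ne: "\<alpha> powr e \<noteq> 0" using assms(9) by simp
  have mulp: "\<And>p q. p < n \<Longrightarrow> q < n \<Longrightarrow> (\<alpha> * A p q) powr e = \<alpha> powr e * A p q powr e"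
    using pos assms(9) by (simp add: powr_mult)
  have divp: "\<And>p q. p < n \<Longrightarrow> q < n \<Longrightarrow> (A p q / \<alpha>) powr e = A p q powr e / \<alpha> powr e"
    using pos assms(9) by (simp add: powr_divide)
  have row: "(\<Prod>q<n. B m q powr e) = (\<Prod>q<n. A m q powr e)" if m: "m < n" for m
  proof -
    consider "m = i" | "m = j" | "m = k" | "m \<noteq> i" "m \<noteq> j" "m \<noteq> k" by blast
    then show ?thesis
    proof cases
      case 1
      show ?thesis
        by (rule prod_swap2[where a=j and b=k and c="\<alpha> powr e"])
           (use assms(3-8) m 1 ne in \<open>simp_all add: B_def alpha_transform_def mulp divp\<close>)
    next
      case 2
      show ?thesis
        by (rule prod_swap2[where a=k and b=i and c="\<alpha> powr e"])
           (use assms(3-8) m 2 ne in \<open>simp_all add: B_def alpha_transform_def mulp divp\<close>)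
    next
      case 3
      show ?thesis
        by (rule prod_swap2[where a=i and b=j and c="\<alpha> powr e"])
           (use assms(3-8) m 3 ne in \<open>simp_all add: B_def alpha_transform_def mulp divp\<close>)
    next
      case 4
      show ?thesis
        by (rule prod.cong) (use 4 in \<open>auto simp: B_def alpha_transform_def\<close>)
    qed
  qed
  have s: "(\<Sum>k<n. \<Prod>q<n. B k q powr e) = (\<Sum>k<n. \<Prod>q<n. A k q powr e)"
    by (rule sum.cong) (auto simp: row)
  show ?thesis
    unfolding w_LLSM_def B_def[symmetric] e_def[symmetric] using row s by simp
qed

end
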